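(* Let $V$ be a vector space over a field $\mathbb{F}$, let $u\in\mathrm{End}(V)$ and $a\in\mathbb{F}$. Assume that $V^u$ has a stratification satisfying properties (PA) and (PM). Then there exists an endomorphism $v$ of $V$ such that $v^2=av$ and $u-v$ is elementary.
   Context: For $u\in\mathrm{End}(V)$, $V^u$ is the $\mathbb{F}[t]$-module with underlying space $V$ and $t\cdot x:=u(x)$; $u$ is elementary if $V^u$ is a free $\mathbb{F}[t]$-module. A stratification of a non-zero $\mathbb{F}[t]$-module $M$ is an increasing family $(M_\alpha)_{\alpha\in D}$ of submodules indexed by a well-ordered set $D$ such that for each $\alpha\in D$ the quotient $M_\alpha/\sum_{\beta<\alpha}M_\beta$ is non-zero and monogenous (cyclic), and $M=\sum_{\alpha\in D}M_\alpha$. Its dimension sequence is $n_\alpha:=\dim_{\mathbb{F}}\bigl(M_\alpha/\sum_{\beta<\alpha}M_\beta\bigr)\in\mathbb{N}^*\cup\{+\infty\}$. Property (PA): $n_\alpha\ge 2$ whenever $\alpha$ is the successor (least strictly greater element) of some element of $D$. Property (PM): $D$ has no maximum. *)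

theory Defs
  imports Complex_Main "HOL-Library.Extended_Nat"
begin

text \<open>A vector space V over a field F is modelled as the whole type 'v with a
scalar multiplication scale satisfying the locale vector_space.
For an endomorphism u, submodules of the F[t]-module V^u are the u-invariant
subspaces; the sum of a family of submodules is the span of their union.\<close>

definition lower_sum ::
  "('f::field \<Rightarrow> 'v::ab_group_add \<Rightarrow> 'v) \<Rightarrow> ('d::wellorder \<Rightarrow> 'v set) \<Rightarrow> 'd \<Rightarrow> 'v set" where
  "lower_sum scale M \<alpha> = module.span scale (\<Union>\<beta>\<in>{..<\<alpha>}. M \<beta>)"

text \<open>F-dimension of the quotient W/N (N a subspace of W): supremum of the sizes
of finite subsets of W that are linearly independent modulo N.\<close>
definition quot_dim ::
  "('f::field \<Rightarrow> 'v::ab_group_add \<Rightarrow> 'v) \<Rightarrow> 'v set \<Rightarrow> 'v set \<Rightarrow> enat" where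
  "quot_dim scale W N =
     (SUP B \<in> {B. finite B \<and> B \<subseteq> W \<and> \<not> module.dependent scale B
                 \<and> module.span scale B \<inter> N = {0}}. enat (card B))"

definition stratification ::
  "('f::field \<Rightarrow> 'v::ab_group_add \<Rightarrow> 'v) \<Rightarrow> ('v \<Rightarrow> 'v) \<Rightarrow> ('d::wellorder \<Rightarrow> 'v set) \<Rightarrow> bool" where
  "stratification scale u M \<longleftrightarrow>
     (\<forall>\<alpha>. module.subspace scale (M \<alpha>) \<and> u ` M \<alpha> \<subseteq> M \<alpha>) \<and>
     mono M \<and>
     (\<forall>\<alpha>. \<not> M \<alpha> \<subseteq> lower_sum scale M \<alpha> \<and>
          (\<exists>x\<in>M \<alpha>. M \<alpha> = module.span scale (lower_sum scale M \<alpha> \<union> range (\<lambda>k. (u ^^ k) x)))) \<and>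
     module.span scale (\<Union>\<alpha>. M \<alpha>) = UNIV"

definition strat_dim ::
  "('f::field \<Rightarrow> 'v::ab_group_add \<Rightarrow> 'v) \<Rightarrow> ('d::wellorder \<Rightarrow> 'v set) \<Rightarrow> 'd \<Rightarrow> enat" where
  "strat_dim scale M \<alpha> = quot_dim scale (M \<alpha>) (lower_sum scale M \<alpha>)"

definition is_successor :: "'d::wellorder \<Rightarrow> 'd \<Rightarrow> bool" where
  "is_successor \<alpha> \<beta> \<longleftrightarrow> \<beta> < \<alpha> \<and> \<not> (\<exists>\<gamma>. \<beta> < \<gamma> \<and> \<gamma> < \<alpha>)"

definition property_PA ::
  "('f::field \<Rightarrow> 'v::ab_group_add \<Rightarrow> 'v) \<Rightarrow> ('d::wellorder \<Rightarrow> 'v set) \<Rightarrow> bool" where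
  "property_PA scale M \<longleftrightarrow> (\<forall>\<alpha> \<beta>. is_successor \<alpha> \<beta> \<longrightarrow> strat_dim scale M \<alpha> \<ge> 2)"

definition property_PM :: "('d::wellorder \<Rightarrow> 'v set) \<Rightarrow> bool" where
  "property_PM M \<longleftrightarrow> (\<forall>\<alpha>::'d. \<exists>\<beta>. \<alpha> < \<beta>)"

text \<open>w is elementary iff V^w is a free F[t]-module: there is B such that the
vectors w^k b (k in nat, b in B) are pairwise distinct and form an F-basis of V.\<close>
definition elementary ::
  "('f::field \<Rightarrow> 'v::ab_group_add \<Rightarrow> 'v) \<Rightarrow> ('v \<Rightarrow> 'v) \<Rightarrow> bool" where
  "elementary scale w \<longleftrightarrow>
     (\<exists>B. inj_on (\<lambda>(k, b). (w ^^ k) b) (UNIV \<times> B) \<and>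
          \<not> module.dependent scale ((\<lambda>(k, b). (w ^^ k) b) ` (UNIV \<times> B)) \<and>
          module.span scale ((\<lambda>(k, b). (w ^^ k) b) ` (UNIV \<times> B)) = UNIV)"

end

theory Submission
  imports Defs "HOL-Library.Product_Lexorder"
begin

lemma lexless [simp]: "((a::'a::linorder), (b::'b::linorder)) < (c, d) \<longleftrightarrow> a < c \<or> a = c \<and> b < d"
  by (auto simp: le_less)
lemma lexle [simp]: "((a::'a::linorder), (b::'b::linorder)) \<le> (c, d) \<longleftrightarrow> a < c \<or> a = c \<and> b \<le> d"
  by (auto simp: le_less)
declare less_prod_simp [simp del] less_eq_prod_simp [simp del]

context vector_space
begin

lemma tri_indep:
  fixes g :: "'i::linorder \<Rightarrow> 'b"
  assumes H: "\<And>i. i \<in> I \<Longrightarrow> g i \<notin> span (g ` {j\<in>I. j < i})"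
  shows "inj_on g I" and "independent (g ` I)"
proof -
  show inj: "inj_on g I"
  proof (rule inj_onI)
    fix i j assume ij: "i \<in> I" "j \<in> I" "g i = g j"
    show "i = j"
    proof (rule ccontr)
      assume "i \<noteq> j"
      then consider "i < j" | "j < i" by fastforce
      then show False
      proof cases
        case 1
        then have "g j \<in> span (g ` {k\<in>I. k < j})"
          using ij by (intro span_base) (auto intro: image_eqI[where x=i])
        then show False using H ij by blast
      next
        case 2
        then have "g i \<in> span (g ` {k\<in>I. k < i})"
          using ij by (intro span_base) (auto intro: image_eqI[where x=j])
        then show False using H ij by blast
      qed
    qed
  qed
  show "independent (g ` I)"
  proof
    assume "dependent (g ` I)"
    then obtain t c v where t: "finite t" "t \<subseteq> g ` I" "(\<Sum>v\<in>t. c v *s v) = 0"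
      and v: "v \<in> t" "c v \<noteq> 0"
      unfolding dependent_explicit by blast
    define J where "J = {i\<in>I. g i \<in> t \<and> c (g i) \<noteq> 0}"
    have "J \<subseteq> g -` t \<inter> I" unfolding J_def by auto
    moreover have "finite (g -` t \<inter> I)" by (rule finite_vimage_IntI[OF t(1) inj])
    ultimately have finJ: "finite J" by (rule finite_subset)
    have "J \<noteq> {}" using v t(2) unfolding J_def by auto
    define m where "m = Max J"
    have mJ: "m \<in> J" unfolding m_def using finJ \<open>J \<noteq> {}\<close> by (rule Max_in)
    have mmax: "\<And>j. j \<in> J \<Longrightarrow> j \<le> m" unfolding m_def using finJ by simp
    have gm: "g m \<in> t" "c (g m) \<noteq> 0" "m \<in> I" using mJ unfolding J_def by auto
    have "(\<Sum>v\<in>t. c v *s v) = c (g m) *s g m + (\<Sum>v\<in>t - {g m}. c v *s v)"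
      using t(1) gm(1) by (simp add: sum.remove)
    then have eq: "c (g m) *s g m = - (\<Sum>v\<in>t - {g m}. c v *s v)"
      using t(3) by (simp add: eq_neg_iff_add_eq_0)
    have "(\<Sum>v\<in>t - {g m}. c v *s v) \<in> span (g ` {j\<in>I. j < m})"
    proof (rule span_sum)
      fix w assume w: "w \<in> t - {g m}"
      show "c w *s w \<in> span (g ` {j\<in>I. j < m})"
      proof (cases "c w = 0")
        case True then show ?thesis by (simp add: span_zero)
      next
        case False
        from w t(2) obtain j where j: "j \<in> I" "w = g j" by auto
        then have "j \<in> J" using w False unfolding J_def by auto
        then have "j \<le> m" by (rule mmax)
        moreover have "j \<noteq> m" using j w by auto
        ultimately have "j < m" by simp
        then have "w \<in> span (g ` {j\<in>I. j < m})" using j by (intro span_base) auto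
        then show ?thesis by (rule span_scale)
      qed
    qed
    then have "c (g m) *s g m \<in> span (g ` {j\<in>I. j < m})"
      unfolding eq by (rule span_neg)
    then have "inverse (c (g m)) *s (c (g m) *s g m) \<in> span (g ` {j\<in>I. j < m})"
      by (rule span_scale)
    then have "g m \<in> span (g ` {j\<in>I. j < m})" using gm(2) by simp
    then show False using H gm(3) by blast
  qed
qed

lemma lin_span_sub:
  assumes "Vector_Spaces.linear scale scale f" and "f ` S \<subseteq> span T"
  shows "f ` span S \<subseteq> span T"
proof -
  interpret f: Vector_Spaces.linear scale scale f by fact
  have "f ` span S = span (f ` S)" by (simp add: f.span_image)
  also have "\<dots> \<subseteq> span T" using assms(2) by (intro span_minimal) auto
  finally show ?thesis .
qed

lemma tri_basis:
  fixes e g :: "'i::wellorder \<Rightarrow> 'b"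
  assumes He: "\<And>i. i \<in> I \<Longrightarrow> e i \<notin> span (e ` {j\<in>I. j < i})"
    and Hg: "\<And>i. i \<in> I \<Longrightarrow> g i - e i \<in> span (e ` {j\<in>I. j < i})"
  shows "\<And>i. i \<in> I \<Longrightarrow> g i \<notin> span (g ` {j\<in>I. j < i})"
    and "span (g ` I) = span (e ` I)"
proof -
  have C: "i \<in> I \<Longrightarrow> e i \<in> span (g ` {j\<in>I. j \<le> i})" for i
  proof (induction i rule: less_induct)
    case (less i)
    have "e ` {j\<in>I. j < i} \<subseteq> span (g ` {j\<in>I. j \<le> i})"
    proof
      fix y assume "y \<in> e ` {j\<in>I. j < i}"
      then obtain j where j: "j \<in> I" "j < i" "y = e j" by auto
      have "e j \<in> span (g ` {k\<in>I. k \<le> j})" using less.IH j by blast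
      also have "\<dots> \<subseteq> span (g ` {k\<in>I. k \<le> i})"
        using j by (intro span_mono image_mono) auto
      finally show "y \<in> span (g ` {j\<in>I. j \<le> i})" using j by simp
    qed
    then have "span (e ` {j\<in>I. j < i}) \<subseteq> span (g ` {j\<in>I. j \<le> i})"
      by (intro span_minimal) auto
    then have "g i - e i \<in> span (g ` {j\<in>I. j \<le> i})" using Hg less.prems by blast
    moreover have "g i \<in> span (g ` {j\<in>I. j \<le> i})" using less.prems by (intro span_base) auto
    ultimately have "g i - (g i - e i) \<in> span (g ` {j\<in>I. j \<le> i})" by (rule span_diff[rotated])
    then show ?case by simp
  qed
  have D: "i \<in> I \<Longrightarrow> g i \<in> span (e ` {j\<in>I. j \<le> i})" for i
  proof -
    assume i: "i \<in> I"
    have "g i - e i \<in> span (e ` {j\<in>I. j \<le> i})"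
    proof -
      have "e ` {j\<in>I. j < i} \<subseteq> e ` {j\<in>I. j \<le> i}" by auto
      then show ?thesis using Hg[OF i] span_mono[of "e ` {j\<in>I. j < i}" "e ` {j\<in>I. j \<le> i}"] by blast
    qed
    moreover have "e i \<in> span (e ` {j\<in>I. j \<le> i})" using i by (intro span_base) auto
    ultimately have "(g i - e i) + e i \<in> span (e ` {j\<in>I. j \<le> i})" by (rule span_add)
    then show ?thesis by simp
  qed
  show "g i \<notin> span (g ` {j\<in>I. j < i})" if i: "i \<in> I" for i
  proof
    assume gi: "g i \<in> span (g ` {j\<in>I. j < i})"
    have "g ` {j\<in>I. j < i} \<subseteq> span (e ` {j\<in>I. j < i})"
    proof
      fix y assume "y \<in> g ` {j\<in>I. j < i}"
      then obtain j where j: "j \<in> I" "j < i" "y = g j" by auto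
      have "g j \<in> span (e ` {k\<in>I. k \<le> j})" using D j by blast
      also have "\<dots> \<subseteq> span (e ` {k\<in>I. k < i})"
        using j by (intro span_mono image_mono) auto
      finally show "y \<in> span (e ` {j\<in>I. j < i})" using j by simp
    qed
    then have "span (g ` {j\<in>I. j < i}) \<subseteq> span (e ` {j\<in>I. j < i})"
      by (intro span_minimal) auto
    then have "g i \<in> span (e ` {j\<in>I. j < i})" using gi by blast
    then have "g i - (g i - e i) \<in> span (e ` {j\<in>I. j < i})"
      using Hg[OF i] by (rule span_diff)
    then show False using He[OF i] by simp
  qed
  show "span (g ` I) = span (e ` I)"
    unfolding span_eq
  proof (intro conjI subsetI)
    fix y assume "y \<in> g ` I"
    then obtain i where i: "i \<in> I" "y = g i" by auto
    show "y \<in> span (e ` I)" using D[OF i(1)] span_mono[of "e ` {j\<in>I. j \<le> i}" "e ` I"] i by auto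
  next
    fix y assume "y \<in> e ` I"
    then obtain i where i: "i \<in> I" "y = e i" by auto
    show "y \<in> span (g ` I)" using C[OF i(1)] span_mono[of "g ` {j\<in>I. j \<le> i}" "g ` I"] i by auto
  qed
qed

end

locale strat_ctx = vector_space scale for scale :: "'f::field \<Rightarrow> 'v::ab_group_add \<Rightarrow> 'v" +
  fixes u :: "'v \<Rightarrow> 'v" and M :: "'d::wellorder \<Rightarrow> 'v set"
  assumes lin_u: "Vector_Spaces.linear scale scale u"
    and strat: "stratification scale u M"
    and PA: "property_PA scale M"
    and PM: "property_PM M"
begin

sublocale lu: Vector_Spaces.linear scale scale u by (rule lin_u)

definition L where "L \<alpha> = lower_sum scale M \<alpha>"

lemma L_def': "L \<alpha> = span (\<Union>\<beta>\<in>{..<\<alpha>}. M \<beta>)"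
  by (simp add: L_def lower_sum_def)

lemmas sp = strat[unfolded stratification_def]

lemma M_sub: "subspace (M \<alpha>)" "u ` M \<alpha> \<subseteq> M \<alpha>"
  using conjunct1[OF sp] by blast+

lemma M_mono: "mono M"
  using conjunct1[OF conjunct2[OF sp]] .

lemma M_notsub: "\<not> M \<alpha> \<subseteq> L \<alpha>"
  using conjunct1[OF conjunct2[OF conjunct2[OF sp]]] unfolding L_def by blast

lemma M_gen: "\<exists>x\<in>M \<alpha>. M \<alpha> = span (L \<alpha> \<union> range (\<lambda>k. (u ^^ k) x))"
  using conjunct1[OF conjunct2[OF conjunct2[OF sp]]] unfolding L_def by blast

lemma M_span: "span (\<Union>\<alpha>. M \<alpha>) = UNIV"
  using conjunct2[OF conjunct2[OF conjunct2[OF sp]]] .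

definition xg where "xg \<alpha> = (SOME x. x \<in> M \<alpha> \<and> M \<alpha> = span (L \<alpha> \<union> range (\<lambda>k. (u ^^ k) x)))"

lemma xg: "xg \<alpha> \<in> M \<alpha>" "M \<alpha> = span (L \<alpha> \<union> range (\<lambda>k. (u ^^ k) (xg \<alpha>)))"
proof -
  have "\<exists>x. x \<in> M \<alpha> \<and> M \<alpha> = span (L \<alpha> \<union> range (\<lambda>k. (u ^^ k) x))" using M_gen by blast
  then have "xg \<alpha> \<in> M \<alpha> \<and> M \<alpha> = span (L \<alpha> \<union> range (\<lambda>k. (u ^^ k) (xg \<alpha>)))"
    unfolding xg_def by (rule someI_ex)
  then show "xg \<alpha> \<in> M \<alpha>" "M \<alpha> = span (L \<alpha> \<union> range (\<lambda>k. (u ^^ k) (xg \<alpha>)))" by auto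
qed

lemma L_subspace: "subspace (L \<alpha>)"
  unfolding L_def' by simp

lemma L_sub_M: "L \<alpha> \<subseteq> M \<alpha>"
  unfolding L_def'
proof (rule span_minimal)
  show "(\<Union>\<beta>\<in>{..<\<alpha>}. M \<beta>) \<subseteq> M \<alpha>"
  proof (rule UN_least)
    fix \<beta> assume "\<beta> \<in> {..<\<alpha>}"
    then have "\<beta> \<le> \<alpha>" by simp
    then show "M \<beta> \<subseteq> M \<alpha>" by (rule monoD[OF M_mono])
  qed
qed (rule M_sub)

lemma M_sub_L: assumes "\<beta> < \<alpha>" shows "M \<beta> \<subseteq> L \<alpha>"
proof -
  have "M \<beta> \<subseteq> (\<Union>\<beta>\<in>{..<\<alpha>}. M \<beta>)" using assms by auto
  also have "\<dots> \<subseteq> L \<alpha>" unfolding L_def' by (rule span_superset)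
  finally show ?thesis .
qed

lemma L_mono: assumes "\<beta> \<le> \<alpha>" shows "L \<beta> \<subseteq> L \<alpha>"
proof -
  have "{..<\<beta>} \<subseteq> {..<\<alpha>}" using assms by (simp add: lessThan_subset_iff)
  then have "M ` {..<\<beta>} \<subseteq> M ` {..<\<alpha>}" by (rule image_mono)
  then have "(\<Union>\<gamma>\<in>{..<\<beta>}. M \<gamma>) \<subseteq> (\<Union>\<gamma>\<in>{..<\<alpha>}. M \<gamma>)" by (rule Union_mono)
  then show ?thesis unfolding L_def' by (rule span_mono)
qed

lemma u_span_sub: assumes "u ` S \<subseteq> span T" shows "u ` span S \<subseteq> span T"
proof -
  have "u ` span S = span (u ` S)" by (simp add: lu.span_image)
  also have "\<dots> \<subseteq> span T" using assms by (intro span_minimal) auto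
  finally show ?thesis .
qed

lemma L_inv: "u ` L \<alpha> \<subseteq> L \<alpha>"
proof -
  have "u ` (\<Union>\<beta>\<in>{..<\<alpha>}. M \<beta>) \<subseteq> (\<Union>\<beta>\<in>{..<\<alpha>}. M \<beta>)"
    using M_sub(2) by blast
  then have "u ` (\<Union>\<beta>\<in>{..<\<alpha>}. M \<beta>) \<subseteq> span (\<Union>\<beta>\<in>{..<\<alpha>}. M \<beta>)"
    using span_superset by (rule order_trans)
  then show ?thesis unfolding L_def' by (rule u_span_sub)
qed

lemma funpow_Suc_app: "(u ^^ Suc k) y = u ((u ^^ k) y)" by simp

lemma orbit_M: "(u ^^ k) (xg \<alpha>) \<in> M \<alpha>"
proof -
  have "(u ^^ k) (xg \<alpha>) \<in> span (L \<alpha> \<union> range (\<lambda>k. (u ^^ k) (xg \<alpha>)))"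
    by (rule span_base) simp
  then show ?thesis using xg(2)[of \<alpha>] by simp
qed

definition P where "P \<alpha> k \<longleftrightarrow> (u ^^ k) (xg \<alpha>) \<notin> span (L \<alpha> \<union> {(u ^^ m) (xg \<alpha>) | m. m < k})"

lemma P0: "P \<alpha> 0"
proof (rule ccontr)
  assume "\<not> P \<alpha> 0"
  then have x: "xg \<alpha> \<in> L \<alpha>" unfolding P_def using span_eq_iff[THEN iffD2, OF L_subspace] by simp
  have "(u ^^ k) (xg \<alpha>) \<in> L \<alpha>" for k
  proof (induction k)
    case (Suc k) then show ?case using L_inv by auto
  qed (simp add: x)
  then have "L \<alpha> \<union> range (\<lambda>k. (u ^^ k) (xg \<alpha>)) \<subseteq> L \<alpha>" by auto
  then have "M \<alpha> \<subseteq> L \<alpha>" using xg(2)[of \<alpha>] span_minimal[OF _ L_subspace] by metis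
  then show False using M_notsub by blast
qed

lemma P_Suc: assumes "\<not> P \<alpha> k" shows "\<not> P \<alpha> (Suc k)"
proof -
  let ?S = "span (L \<alpha> \<union> {(u ^^ m) (xg \<alpha>) | m. m < k})"
  let ?S' = "span (L \<alpha> \<union> {(u ^^ m) (xg \<alpha>) | m. m < Suc k})"
  have "u ` (L \<alpha> \<union> {(u ^^ m) (xg \<alpha>) | m. m < k}) \<subseteq> ?S'"
  proof
    fix y assume "y \<in> u ` (L \<alpha> \<union> {(u ^^ m) (xg \<alpha>) | m. m < k})"
    then consider "y \<in> u ` L \<alpha>" | m where "m < k" "y = (u ^^ Suc m) (xg \<alpha>)" by auto
    then show "y \<in> ?S'"
    proof cases
      case 1 then show ?thesis using L_inv span_superset by blast
    next
      case 2 then show ?thesis by (intro span_base) blast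
    qed
  qed
  then have "u ` ?S \<subseteq> ?S'" by (rule u_span_sub)
  moreover have "(u ^^ k) (xg \<alpha>) \<in> ?S" using assms unfolding P_def by simp
  ultimately have "u ((u ^^ k) (xg \<alpha>)) \<in> ?S'" by blast
  then show ?thesis unfolding P_def by simp
qed

lemma notP_mono: "\<not> P \<alpha> m \<Longrightarrow> m \<le> k \<Longrightarrow> \<not> P \<alpha> k"
proof (induction k)
  case (Suc k)
  then show ?case
  proof (cases "m = Suc k")
    case False
    then have "m \<le> k" using Suc.prems by simp
    then show ?thesis using Suc P_Suc by blast
  qed simp
qed simp

lemma P_down: "P \<alpha> k \<Longrightarrow> m \<le> k \<Longrightarrow> P \<alpha> m"
  using notP_mono by blast

lemma orbit_span: "(u ^^ k) (xg \<alpha>) \<in> span (L \<alpha> \<union> {(u ^^ m) (xg \<alpha>) | m. P \<alpha> m})"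
proof (induction k rule: less_induct)
  case (less k)
  let ?T = "span (L \<alpha> \<union> {(u ^^ m) (xg \<alpha>) | m. P \<alpha> m})"
  show ?case
  proof (cases "P \<alpha> k")
    case True then show ?thesis by (intro span_base) blast
  next
    case False
    then have "(u ^^ k) (xg \<alpha>) \<in> span (L \<alpha> \<union> {(u ^^ m) (xg \<alpha>) | m. m < k})"
      unfolding P_def by simp
    moreover have "L \<alpha> \<union> {(u ^^ m) (xg \<alpha>) | m. m < k} \<subseteq> ?T"
      using less.IH span_superset[of "L \<alpha> \<union> {(u ^^ m) (xg \<alpha>) | m. P \<alpha> m}"] by blast
    then have "span (L \<alpha> \<union> {(u ^^ m) (xg \<alpha>) | m. m < k}) \<subseteq> ?T"
      by (intro span_minimal) auto
    ultimately show ?thesis by blast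
  qed
qed

lemma M_eq: "M \<alpha> = span (L \<alpha> \<union> {(u ^^ m) (xg \<alpha>) | m. P \<alpha> m})"
proof
  show "M \<alpha> \<subseteq> span (L \<alpha> \<union> {(u ^^ m) (xg \<alpha>) | m. P \<alpha> m})"
  proof -
    have "L \<alpha> \<union> range (\<lambda>k. (u ^^ k) (xg \<alpha>)) \<subseteq> span (L \<alpha> \<union> {(u ^^ m) (xg \<alpha>) | m. P \<alpha> m})"
      using orbit_span span_superset[of "L \<alpha> \<union> {(u ^^ m) (xg \<alpha>) | m. P \<alpha> m}"] by blast
    then show ?thesis by (subst xg(2), intro span_minimal) auto
  qed
  show "span (L \<alpha> \<union> {(u ^^ m) (xg \<alpha>) | m. P \<alpha> m}) \<subseteq> M \<alpha>"
    using L_sub_M orbit_M M_sub(1) by (intro span_minimal) auto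
qed

definition I where "I = {(\<alpha>, k). P \<alpha> k}"
definition e where "e = (\<lambda>(\<alpha>, k). (u ^^ k) (xg \<alpha>))"

lemma e_M: "e (\<alpha>, k) \<in> M \<alpha>"
  unfolding e_def using orbit_M by simp

lemma M_in_span_e: "M \<alpha> \<subseteq> span (e ` {i\<in>I. fst i \<le> \<alpha>})"
proof (induction \<alpha> rule: less_induct)
  case (less \<alpha>)
  let ?T = "span (e ` {i\<in>I. fst i \<le> \<alpha>})"
  have "(\<Union>\<beta>\<in>{..<\<alpha>}. M \<beta>) \<subseteq> ?T"
  proof (rule UN_least)
    fix \<beta> assume b: "\<beta> \<in> {..<\<alpha>}"
    have "M \<beta> \<subseteq> span (e ` {i\<in>I. fst i \<le> \<beta>})" using less.IH b by simp
    also have "\<dots> \<subseteq> ?T" using b by (intro span_mono image_mono) auto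
    finally show "M \<beta> \<subseteq> ?T" .
  qed
  then have "L \<alpha> \<subseteq> ?T" unfolding L_def' by (intro span_minimal) auto
  moreover have "{(u ^^ m) (xg \<alpha>) | m. P \<alpha> m} \<subseteq> ?T"
  proof
    fix y assume "y \<in> {(u ^^ m) (xg \<alpha>) | m. P \<alpha> m}"
    then obtain m where "P \<alpha> m" "y = e (\<alpha>, m)" unfolding e_def by auto
    then show "y \<in> ?T" unfolding I_def by (intro span_base) force
  qed
  ultimately show ?case by (subst M_eq) (intro span_minimal, auto)
qed

lemma L_eq: "L \<alpha> = span (e ` {i\<in>I. fst i < \<alpha>})"
proof
  show "L \<alpha> \<subseteq> span (e ` {i\<in>I. fst i < \<alpha>})"
    unfolding L_def'
  proof (rule span_minimal[OF UN_least])
    fix \<beta> assume b: "\<beta> \<in> {..<\<alpha>}"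
    have "M \<beta> \<subseteq> span (e ` {i\<in>I. fst i \<le> \<beta>})" by (rule M_in_span_e)
    also have "\<dots> \<subseteq> span (e ` {i\<in>I. fst i < \<alpha>})" using b by (intro span_mono image_mono) auto
    finally show "M \<beta> \<subseteq> span (e ` {i\<in>I. fst i < \<alpha>})" .
  qed simp
  show "span (e ` {i\<in>I. fst i < \<alpha>}) \<subseteq> L \<alpha>"
  proof (rule span_minimal[OF _ L_subspace])
    show "e ` {i\<in>I. fst i < \<alpha>} \<subseteq> L \<alpha>"
    proof
      fix y assume "y \<in> e ` {i\<in>I. fst i < \<alpha>}"
      then obtain \<gamma> m where "\<gamma> < \<alpha>" "y = e (\<gamma>, m)" by force
      then show "y \<in> L \<alpha>" using e_M M_sub_L by blast
    qed
  qed
qed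

lemma span_e: "span (e ` I) = UNIV"
proof -
  have "(\<Union>\<alpha>. M \<alpha>) \<subseteq> span (e ` I)"
  proof (rule UN_least)
    fix \<alpha>
    have "M \<alpha> \<subseteq> span (e ` {i\<in>I. fst i \<le> \<alpha>})" by (rule M_in_span_e)
    also have "\<dots> \<subseteq> span (e ` I)" by (intro span_mono image_mono) auto
    finally show "M \<alpha> \<subseteq> span (e ` I)" .
  qed
  then have "span (\<Union>\<alpha>. M \<alpha>) \<subseteq> span (e ` I)" by (intro span_minimal) auto
  then show ?thesis using M_span by auto
qed

lemma e_notin: assumes "i \<in> I" shows "e i \<notin> span (e ` {j\<in>I. j < i})"
proof -
  obtain \<alpha> k where i: "i = (\<alpha>, k)" by (cases i)
  have Pk: "P \<alpha> k" using assms i unfolding I_def by simp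
  have "e ` {j\<in>I. j < i} \<subseteq> span (L \<alpha> \<union> {(u ^^ m) (xg \<alpha>) | m. m < k})"
  proof
    fix y assume "y \<in> e ` {j\<in>I. j < i}"
    then obtain \<gamma> m where j: "(\<gamma>, m) \<in> I" "(\<gamma>, m) < (\<alpha>, k)" "y = e (\<gamma>, m)" using i by force
    then consider "\<gamma> < \<alpha>" | "\<gamma> = \<alpha>" "m < k" by auto
    then show "y \<in> span (L \<alpha> \<union> {(u ^^ m) (xg \<alpha>) | m. m < k})"
    proof cases
      case 1
      then have "y \<in> L \<alpha>" using j e_M M_sub_L by blast
      then show ?thesis using span_superset by blast
    next
      case 2
      then show ?thesis using j unfolding e_def by (intro span_base) auto
    qed
  qed
  then have "span (e ` {j\<in>I. j < i}) \<subseteq> span (L \<alpha> \<union> {(u ^^ m) (xg \<alpha>) | m. m < k})"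
    by (intro span_minimal) auto
  moreover have "e i \<notin> span (L \<alpha> \<union> {(u ^^ m) (xg \<alpha>) | m. m < k})"
    using Pk unfolding P_def e_def i by simp
  ultimately show ?thesis by blast
qed

end


context strat_ctx
begin

definition sd :: "'d \<Rightarrow> 'd" where "sd \<alpha> = (LEAST \<beta>. \<alpha> < \<beta>)"

lemma sd: "\<alpha> < sd \<alpha>" "\<alpha> < \<gamma> \<Longrightarrow> sd \<alpha> \<le> \<gamma>"
proof -
  have "\<exists>\<beta>. \<alpha> < \<beta>" using PM unfolding property_PM_def by blast
  then show "\<alpha> < sd \<alpha>" unfolding sd_def by (rule LeastI_ex)
  show "\<alpha> < \<gamma> \<Longrightarrow> sd \<alpha> \<le> \<gamma>" unfolding sd_def by (rule Least_le)
qed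

lemma succ_is: "is_successor (sd \<alpha>) \<alpha>"
  unfolding is_successor_def using sd by (meson leD)

lemma quot_le1:
  assumes Meq: "M \<beta> = span (insert x (L \<beta>))"
  shows "quot_dim scale (M \<beta>) (L \<beta>) \<le> 1"
  unfolding quot_dim_def
proof (rule SUP_least)
  fix B assume "B \<in> {B. finite B \<and> B \<subseteq> M \<beta> \<and> \<not> dependent B \<and> span B \<inter> L \<beta> = {0}}"
  then have B: "finite B" "B \<subseteq> M \<beta>" "independent B" "span B \<inter> L \<beta> = {0}" by auto
  have "\<forall>b1\<in>B. \<forall>b2\<in>B. b1 = b2"
  proof (intro ballI, rule ccontr)
    fix b1 b2 assume b: "b1 \<in> B" "b2 \<in> B" "b1 \<noteq> b2"
    have Ls: "span (L \<beta>) = L \<beta>" using L_subspace by simp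
    obtain c1 where c1: "b1 - scale c1 x \<in> L \<beta>"
      using b(1) B(2) Meq span_breakdown_eq[of b1 x "L \<beta>"] Ls by auto
    obtain c2 where c2: "b2 - scale c2 x \<in> L \<beta>"
      using b(2) B(2) Meq span_breakdown_eq[of b2 x "L \<beta>"] Ls by auto
    have "scale c2 b1 - scale c1 b2 = scale c2 (b1 - scale c1 x) - scale c1 (b2 - scale c2 x)"
      by (simp add: scale_right_diff_distrib mult.commute)
    also have "\<dots> \<in> L \<beta>"
      by (intro c1 c2 subspace_diff[OF L_subspace] subspace_scale[OF L_subspace])
    finally have z1: "scale c2 b1 - scale c1 b2 \<in> L \<beta>" .
    have z2: "scale c2 b1 - scale c1 b2 \<in> span B"
      using b by (intro span_diff span_scale span_base)
    have "scale c2 b1 - scale c1 b2 = 0" using z1 z2 B(4) by blast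
    then have eq: "scale c2 b1 = scale c1 b2" by simp
    show False
    proof (cases "c1 = 0")
      case False
      have "b2 = scale (inverse c1) (scale c1 b2)" using False by simp
      also have "\<dots> = scale (inverse c1) (scale c2 b1)" using eq by simp
      also have "\<dots> \<in> span (B - {b2})" using b by (intro span_scale span_base) auto
      finally have "dependent B" unfolding dependent_def using b by blast
      then show False using B(3) by blast
    next
      case True
      then have "b1 \<in> L \<beta>" using c1 by simp
      moreover have "b1 \<in> span B" using b by (intro span_base)
      ultimately have "b1 = 0" using B(4) by blast
      then have "dependent B" using b dependent_zero by blast
      then show False using B(3) by blast
    qed
  qed
  then have "card B \<le> Suc 0" using B(1) card_le_Suc0_iff_eq by blast
  then show "enat (card B) \<le> 1" by (simp add: one_enat_def)
qed

lemma P1: assumes "strat_dim scale M \<beta> \<ge> 2" shows "P \<beta> 1"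
proof (rule ccontr)
  assume n1: "\<not> P \<beta> 1"
  have "{(u ^^ m) (xg \<beta>) | m. P \<beta> m} = {xg \<beta>}"
  proof -
    have "P \<beta> m \<longleftrightarrow> m = 0" for m
      using notP_mono[OF n1, of m] P0[of \<beta>] by (cases m) auto
    then show ?thesis by auto
  qed
  then have "M \<beta> = span (insert (xg \<beta>) (L \<beta>))" using M_eq[of \<beta>] by simp
  then have "quot_dim scale (M \<beta>) (L \<beta>) \<le> 1" by (rule quot_le1)
  then have "strat_dim scale M \<beta> \<le> 1" unfolding strat_dim_def L_def by simp
  with assms have "(2::enat) \<le> 1" by (rule order_trans)
  then show False by simp
qed

lemma P_sd1: "P (sd \<alpha>) 1"
  using PA succ_is[of \<alpha>] unfolding property_PA_def by (intro P1) blast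

definition sn where "sn i = (if P (fst i) (Suc (snd i)) then (fst i, Suc (snd i)) else (sd (fst i), 0))"

lemma sn_I: "sn i \<in> I"
  unfolding sn_def I_def using P0 by auto

lemma sn_gt: "i < sn i"
  unfolding sn_def using sd(1) by (cases i) auto

lemma sn_least: assumes "i \<in> I" "j \<in> I" "i < j" shows "sn i \<le> j"
proof -
  obtain \<alpha> k where i: "i = (\<alpha>, k)" by (cases i)
  obtain \<beta> m where j: "j = (\<beta>, m)" by (cases j)
  have jP: "P \<beta> m" using assms(2) j unfolding I_def by simp
  show ?thesis
  proof (cases "P \<alpha> (Suc k)")
    case True
    then show ?thesis using assms(3) unfolding sn_def i j by auto
  next
    case False
    then have sni: "sn i = (sd \<alpha>, 0)" unfolding sn_def i by simp
    from assms(3) consider "\<alpha> < \<beta>" | "\<alpha> = \<beta>" "k < m" unfolding i j by auto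
    then show ?thesis
    proof cases
      case 1 then show ?thesis using sd(2)[OF 1] unfolding sni j by (auto simp: le_less)
    next
      case 2
      then have "P \<alpha> (Suc k)" using jP P_down[of \<beta> m "Suc k"] by simp
      then show ?thesis using False by simp
    qed
  qed
qed

lemma sn_mono: "i \<in> I \<Longrightarrow> j \<in> I \<Longrightarrow> i < j \<Longrightarrow> sn i < sn j"
  using sn_least sn_gt le_less_trans by blast

lemma sn_inj: "inj_on sn I"
proof (rule inj_onI)
  fix i j assume "i \<in> I" "j \<in> I" "sn i = sn j"
  then show "i = j" using sn_mono by (metis less_irrefl neqE)
qed

lemma snpow_I: "i \<in> I \<Longrightarrow> (sn ^^ k) i \<in> I"
  by (induction k) (auto simp: sn_I)

definition B0 where "B0 = {i\<in>I. \<forall>j\<in>I. sn j \<noteq> i}"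

lemma B0_cover: "i \<in> I \<Longrightarrow> \<exists>k b. b \<in> B0 \<and> i = (sn ^^ k) b"
proof (induction i rule: less_induct)
  case (less i)
  show ?case
  proof (cases "i \<in> B0")
    case True
    then show ?thesis by (intro exI[of _ 0] exI[of _ i]) simp
  next
    case False
    then obtain j where j: "j \<in> I" "sn j = i" using less.prems unfolding B0_def by auto
    then have "j < i" using sn_gt by blast
    then obtain k b where "b \<in> B0" "j = (sn ^^ k) b" using less.IH j by blast
    then show ?thesis using j by (intro exI[of _ "Suc k"] exI[of _ b]) simp
  qed
qed

lemma B0_I: "b \<in> B0 \<Longrightarrow> b \<in> I" unfolding B0_def by auto

lemma B0_uniq: "b \<in> B0 \<Longrightarrow> c \<in> B0 \<Longrightarrow> (sn ^^ k) b = (sn ^^ m) c \<Longrightarrow> k = m \<and> b = c"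
proof (induction k arbitrary: m)
  case 0
  show ?case
  proof (cases m)
    case 0 then show ?thesis using "0.prems" by simp
  next
    case (Suc m')
    then have "b = sn ((sn ^^ m') c)" using "0.prems" by simp
    moreover have "(sn ^^ m') c \<in> I" using "0.prems" B0_I snpow_I by blast
    ultimately show ?thesis using "0.prems"(1) unfolding B0_def by blast
  qed
next
  case (Suc k)
  show ?case
  proof (cases m)
    case 0
    then have "c = sn ((sn ^^ k) b)" using Suc.prems by simp
    moreover have "(sn ^^ k) b \<in> I" using Suc.prems B0_I snpow_I by blast
    ultimately show ?thesis using Suc.prems(2) unfolding B0_def by blast
  next
    case (Suc m')
    then have "sn ((sn ^^ k) b) = sn ((sn ^^ m') c)" using Suc.prems by simp
    then have "(sn ^^ k) b = (sn ^^ m') c"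
      using sn_inj snpow_I B0_I Suc.prems(1,2) by (meson inj_onD)
    then show ?thesis using Suc.IH Suc.prems(1,2) \<open>m = Suc m'\<close> by blast
  qed
qed

lemma B0_inj: "inj_on (\<lambda>(k, b). (sn ^^ k) b) (UNIV \<times> B0)"
  by (rule inj_onI) (auto dest: B0_uniq)

lemma e_inj: "inj_on e I" and e_indep: "independent (e ` I)"
  using tri_indep[of I e] e_notin by auto

end


locale strat_v = strat_ctx scale u M
  for scale :: "'f::field \<Rightarrow> 'v::ab_group_add \<Rightarrow> 'v" and u :: "'v \<Rightarrow> 'v" and M :: "'d::wellorder \<Rightarrow> 'v set" +
  fixes a :: 'f
begin

sublocale vp: vector_space_pair scale scale ..

definition fv where "fv i = (if P (fst i) (Suc (snd i)) then 0 else scale a (e i) - e (sd (fst i), 0))"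

definition v where "v = vp.construct (e ` I) (\<lambda>y. fv (inv_into I e y))"

lemma v_lin: "Vector_Spaces.linear scale scale v"
  unfolding v_def by (rule vp.linear_construct[OF e_indep])

lemma v_e: assumes "i \<in> I" shows "v (e i) = fv i"
proof -
  have "v (e i) = fv (inv_into I e (e i))"
    unfolding v_def using assms by (subst vp.construct_basis[OF e_indep]) auto
  then show ?thesis using inv_into_f_f[OF e_inj assms] by simp
qed

lemma sd0_I: "(sd \<alpha>, 0) \<in> I"
  unfolding I_def using P0 by simp

lemma fv_sd0: "fv (sd \<alpha>, 0) = 0"
  unfolding fv_def using P_sd1[of \<alpha>] by simp

lemma vv: "v \<circ> v = (\<lambda>x. scale a (v x))"
proof (rule ext)
  fix x
  interpret lv: Vector_Spaces.linear scale scale v by (rule v_lin)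
  have l1: "Vector_Spaces.linear scale scale (v \<circ> v)"
    by (rule Vector_Spaces.linear_compose[OF v_lin v_lin])
  have l2: "Vector_Spaces.linear scale scale (\<lambda>x. scale a (v x))"
    by (rule vp.linear_compose_scale_right[OF v_lin])
  show "(v \<circ> v) x = scale a (v x)"
  proof (rule vp.linear_eq_on[OF l1 l2])
    show "x \<in> span (e ` I)" using span_e by simp
  next
    fix b assume "b \<in> e ` I"
    then obtain i where i: "i \<in> I" "b = e i" by auto
    show "(v \<circ> v) b = scale a (v b)"
    proof (cases "P (fst i) (Suc (snd i))")
      case True
      then have "v b = 0" using v_e[OF i(1)] i(2) by (simp add: fv_def)
      then show ?thesis by simp
    next
      case False
      then have vb: "v b = scale a (e i) - e (sd (fst i), 0)" using v_e[OF i(1)] i(2) by (simp add: fv_def)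
      have "(v \<circ> v) b = scale a (v (e i)) - v (e (sd (fst i), 0))"
        using vb by (simp add: lv.diff lv.scale)
      also have "v (e (sd (fst i), 0)) = 0" using v_e[OF sd0_I] fv_sd0 by simp
      finally show ?thesis using i by simp
    qed
  qed
qed

definition w where "w = (\<lambda>x. u x - v x)"

lemma w_lin: "Vector_Spaces.linear scale scale w"
  unfolding w_def by (rule vp.linear_compose_sub[OF lin_u v_lin])

lemma w_e: assumes iI: "i \<in> I" shows "w (e i) - e (sn i) \<in> span (e ` {j\<in>I. j < sn i})"
proof -
  obtain \<alpha> k where i: "i = (\<alpha>, k)" by (cases i)
  show ?thesis
  proof (cases "P \<alpha> (Suc k)")
    case True
    then have "w (e i) - e (sn i) = 0"
      using v_e[OF iI] unfolding w_def fv_def sn_def i e_def by simp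
    then show ?thesis by (simp add: span_zero)
  next
    case False
    then have eq: "w (e i) - e (sn i) = u (e i) - scale a (e i)"
      using v_e[OF iI] unfolding w_def fv_def sn_def i by simp
    have ei: "e i \<in> M \<alpha>" using e_M i by simp
    have "u (e i) \<in> M \<alpha>" using ei M_sub(2) by blast
    then have "u (e i) - scale a (e i) \<in> M \<alpha>"
      using ei by (intro subspace_diff[OF M_sub(1)] subspace_scale[OF M_sub(1)])
    also have "M \<alpha> \<subseteq> span (e ` {j\<in>I. fst j \<le> \<alpha>})" by (rule M_in_span_e)
    also have "\<dots> \<subseteq> span (e ` {j\<in>I. j < sn i})"
    proof (intro span_mono image_mono subsetI)
      fix j assume j: "j \<in> {j\<in>I. fst j \<le> \<alpha>}"
      obtain \<gamma> m where jj: "j = (\<gamma>, m)" by (cases j)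
      have "\<gamma> \<le> \<alpha>" using j jj by simp
      then have "\<gamma> < sd \<alpha>" using sd(1)[of \<alpha>] by (rule le_less_trans)
      then show "j \<in> {j\<in>I. j < sn i}" using j jj False unfolding sn_def i by simp
    qed
    finally show ?thesis using eq by simp
  qed
qed

lemma w_span: assumes iI: "i \<in> I" shows "w ` span (e ` {j\<in>I. j < i}) \<subseteq> span (e ` {j\<in>I. j < sn i})"
proof (rule lin_span_sub[OF w_lin])
  show "w ` e ` {j\<in>I. j < i} \<subseteq> span (e ` {j\<in>I. j < sn i})"
  proof
    fix y assume "y \<in> w ` e ` {j\<in>I. j < i}"
    then obtain j where j: "j \<in> I" "j < i" "y = w (e j)" by auto
    have snj: "sn j < sn i" using sn_mono j iI by blast
    have "e (sn j) \<in> span (e ` {j\<in>I. j < sn i})" using snj sn_I by (intro span_base) auto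
    moreover have "w (e j) - e (sn j) \<in> span (e ` {j\<in>I. j < sn i})"
    proof -
      have "span (e ` {k\<in>I. k < sn j}) \<subseteq> span (e ` {j\<in>I. j < sn i})"
        using snj by (intro span_mono image_mono) auto
      then show ?thesis using w_e[OF j(1)] by blast
    qed
    ultimately have "e (sn j) + (w (e j) - e (sn j)) \<in> span (e ` {j\<in>I. j < sn i})" by (rule span_add)
    then show "y \<in> span (e ` {j\<in>I. j < sn i})" using j by simp
  qed
qed

lemma w_pow: assumes bI: "b \<in> I" shows "(w ^^ k) (e b) - e ((sn ^^ k) b) \<in> span (e ` {j\<in>I. j < (sn ^^ k) b})"
proof (induction k)
  case 0 then show ?case by (simp add: span_zero)
next
  case (Suc k)
  interpret lw: Vector_Spaces.linear scale scale w by (rule w_lin)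
  define i where "i = (sn ^^ k) b"
  have iI: "i \<in> I" unfolding i_def using bI by (rule snpow_I)
  define r where "r = (w ^^ k) (e b) - e i"
  have r: "r \<in> span (e ` {j\<in>I. j < i})" using Suc.IH unfolding r_def i_def .
  have "(w ^^ Suc k) (e b) - e ((sn ^^ Suc k) b) = w (e i + r) - e (sn i)"
    unfolding r_def i_def by simp
  also have "\<dots> = (w (e i) - e (sn i)) + w r" by (simp add: lw.add)
  finally have eq: "(w ^^ Suc k) (e b) - e ((sn ^^ Suc k) b) = (w (e i) - e (sn i)) + w r" .
  have "w r \<in> span (e ` {j\<in>I. j < sn i})" using w_span[OF iI] r by blast
  then have "(w (e i) - e (sn i)) + w r \<in> span (e ` {j\<in>I. j < sn i})"
    using w_e[OF iI] by (intro span_add)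
  then show ?case unfolding eq i_def by simp
qed

lemma w_elementary: "elementary scale w"
proof -
  define \<Phi> where "\<Phi> = (\<lambda>(k::nat, b). (sn ^^ k) b)"
  define h where "h = inv_into (UNIV \<times> B0) \<Phi>"
  define g where "g i = (w ^^ (fst (h i))) (e (snd (h i)))" for i
  have Phi: "\<Phi> (k, b) = (sn ^^ k) b" for k b unfolding \<Phi>_def by simp
  have Phi_inj: "inj_on \<Phi> (UNIV \<times> B0)" unfolding \<Phi>_def by (rule B0_inj)
  have hI: "h i \<in> UNIV \<times> B0" "\<Phi> (h i) = i" if iI: "i \<in> I" for i
  proof -
    obtain k b where "b \<in> B0" "i = (sn ^^ k) b" using B0_cover[OF iI] by blast
    then have "i \<in> \<Phi> ` (UNIV \<times> B0)" unfolding \<Phi>_def by force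
    then show "h i \<in> UNIV \<times> B0" "\<Phi> (h i) = i" unfolding h_def
      by (auto intro: inv_into_into f_inv_into_f)
  qed
  have gd: "g i - e i \<in> span (e ` {j\<in>I. j < i})" if iI: "i \<in> I" for i
  proof -
    obtain k b where kb: "h i = (k, b)" by (cases "h i")
    have b: "b \<in> B0" using hI(1)[OF iI] kb by auto
    have ii: "(sn ^^ k) b = i" using hI(2)[OF iI] kb Phi by simp
    show ?thesis using w_pow[OF B0_I[OF b], of k] unfolding g_def kb ii by simp
  qed
  have tb1: "\<And>i. i \<in> I \<Longrightarrow> g i \<notin> span (g ` {j\<in>I. j < i})"
    and tb2: "span (g ` I) = span (e ` I)"
    using tri_basis[of I e g, OF e_notin gd] by auto
  have g_inj: "inj_on g I" and g_ind: "independent (g ` I)" using tri_indep[of I g, OF tb1] by auto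
  have hPhi: "h ((sn ^^ k) b) = (k, b)" if "b \<in> B0" for k b
    using inv_into_f_f[OF Phi_inj, of "(k, b)"] that unfolding h_def Phi by simp
  have gPhi: "g ((sn ^^ k) b) = (w ^^ k) (e b)" if "b \<in> B0" for k b
    unfolding g_def hPhi[OF that] by simp
  have img: "(\<lambda>(k, b). (w ^^ k) b) ` (UNIV \<times> e ` B0) = g ` I"
  proof
    show "(\<lambda>(k, b). (w ^^ k) b) ` (UNIV \<times> e ` B0) \<subseteq> g ` I"
    proof
      fix y assume "y \<in> (\<lambda>(k, b). (w ^^ k) b) ` (UNIV \<times> e ` B0)"
      then obtain k b where kb: "b \<in> B0" "y = (w ^^ k) (e b)" by auto
      then have "y = g ((sn ^^ k) b)" using gPhi by simp
      moreover have "(sn ^^ k) b \<in> I" using kb B0_I snpow_I by blast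
      ultimately show "y \<in> g ` I" by blast
    qed
    show "g ` I \<subseteq> (\<lambda>(k, b). (w ^^ k) b) ` (UNIV \<times> e ` B0)"
    proof
      fix y assume "y \<in> g ` I"
      then obtain i where i: "i \<in> I" "y = g i" by auto
      obtain k b where kb: "h i = (k, b)" by (cases "h i")
      have b: "b \<in> B0" using hI(1)[OF i(1)] kb by auto
      have "y = (w ^^ k) (e b)" unfolding i(2) g_def kb by simp
      then show "y \<in> (\<lambda>(k, b). (w ^^ k) b) ` (UNIV \<times> e ` B0)" using b by force
    qed
  qed
  have inj: "inj_on (\<lambda>(k, b). (w ^^ k) b) (UNIV \<times> e ` B0)"
  proof (rule inj_onI)
    fix p q assume p: "p \<in> UNIV \<times> e ` B0" and q: "q \<in> UNIV \<times> e ` B0"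
      and eq: "(\<lambda>(k, b). (w ^^ k) b) p = (\<lambda>(k, b). (w ^^ k) b) q"
    obtain k1 b1 where p1: "p = (k1, e b1)" "b1 \<in> B0" using p by auto
    obtain k2 b2 where q1: "q = (k2, e b2)" "b2 \<in> B0" using q by auto
    have "g ((sn ^^ k1) b1) = g ((sn ^^ k2) b2)" using eq gPhi p1 q1 by simp
    moreover have "(sn ^^ k1) b1 \<in> I" "(sn ^^ k2) b2 \<in> I" using p1 q1 B0_I snpow_I by blast+
    ultimately have "(sn ^^ k1) b1 = (sn ^^ k2) b2" using g_inj by (meson inj_onD)
    then have "k1 = k2 \<and> b1 = b2" using B0_uniq p1 q1 by blast
    then show "p = q" using p1 q1 by simp
  qed
  show ?thesis
    unfolding elementary_def
    using inj img g_ind tb2 span_e by (intro exI[of _ "e ` B0"]) simp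
qed

end

theorem proposition3:
  fixes scale :: "'f::field \<Rightarrow> 'v::ab_group_add \<Rightarrow> 'v"
    and u :: "'v \<Rightarrow> 'v" and a :: 'f
    and M :: "'d::wellorder \<Rightarrow> 'v set"
  assumes "vector_space scale"
    and "Vector_Spaces.linear scale scale u"
    and "stratification scale u M"
    and "property_PA scale M"
    and "property_PM M"
  shows "\<exists>v. Vector_Spaces.linear scale scale v \<and> v \<circ> v = (\<lambda>x. scale a (v x)) \<and>
             elementary scale (\<lambda>x. u x - v x)"
proof -
  have "strat_ctx scale u M"
    unfolding strat_ctx_def strat_ctx_axioms_def using assms by simp
  then interpret strat_ctx scale u M .
  interpret sv: strat_v scale u M a by unfold_locales
  show ?thesis
    using sv.v_lin sv.vv sv.w_elementary unfolding sv.w_def by blast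
qed

end
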